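(* Let $m,n\in\mathbb{N}$ and let $p_{j,\ell},q_{j,\ell}\in\mathbb{C}$ with $\Re(p_{j,\ell})>0$, $\Re(q_{j,\ell})>0$ for $1\le j\le n$, $1\le\ell\le m$. Then the $n\times n$ matrix \[ \left(\prod_{\ell=1}^{m}B\left(p_{j,\ell}+\overline{p_{k,\ell}},\ q_{j,\ell}+\overline{q_{k,\ell}}\right)\right)_{j,k=1}^{n} \] is positive semidefinite.
   Context: $B(p,q)=\int_{0}^{1}x^{p-1}(1-x)^{q-1}dx$ for $\Re(p),\Re(q)>0$ is Euler's Beta function. A complex matrix $A=(a_{j,k})$ is positive semidefinite if $\sum_{j,k}a_{j,k}z_j\overline{z_k}\ge0$ for all complex $z_j$. *)

theory Defs
  imports "HOL-Analysis.Analysis"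
begin

definition psd_matrix :: "nat \<Rightarrow> (nat \<Rightarrow> nat \<Rightarrow> complex) \<Rightarrow> bool" where
  "psd_matrix n A \<longleftrightarrow>
     (\<forall>z :: nat \<Rightarrow> complex.
        Im (\<Sum>j=1..n. \<Sum>k=1..n. A j k * z j * cnj (z k)) = 0 \<and>
        Re (\<Sum>j=1..n. \<Sum>k=1..n. A j k * z j * cnj (z k)) \<ge> 0)"

end

theory Submission
  imports Defs "HOL-Complex_Analysis.Complex_Analysis"
begin

definition EB :: "complex \<Rightarrow> complex \<Rightarrow> real \<Rightarrow> complex" where
  "EB a b t = exp ((a - 1) * of_real (ln t) + (b - 1) * of_real (ln (1 - t)))"

lemma EB_gram:
  "EB (p + cnj p') (q + cnj q') t = EB (p + 1/2) (q + 1/2) t * cnj (EB (p' + 1/2) (q' + 1/2) t)"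
  unfolding EB_def exp_cnj exp_add[symmetric] by (simp add: algebra_simps)

lemma EB_gram': "EB (p + cnj p') (q + cnj q') = (\<lambda>t. EB (p + 1/2) (q + 1/2) t * cnj (EB (p' + 1/2) (q' + 1/2) t))"
  by (rule ext, rule EB_gram)

lemma norm_EB:
  assumes "0 < t" "t < 1"
  shows "norm (EB a b t) = t powr (Re a - 1) * (1 - t) powr (Re b - 1)"
proof -
  have "norm (EB a b t) = exp ((Re a - 1) * ln t + (Re b - 1) * ln (1 - t))"
    unfolding EB_def norm_exp_eq_Re by simp
  also have "\<dots> = t powr (Re a - 1) * (1 - t) powr (Re b - 1)"
    using assms by (simp add: powr_def exp_add mult.commute)
  finally show ?thesis .
qed

lemma EB_real:
  assumes "0 < t" "t < 1"
  shows "EB (of_real a) (of_real b) t = of_real (t powr (a - 1) * (1 - t) powr (b - 1))"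
proof -
  have "EB (of_real a) (of_real b) t = of_real (exp ((a - 1) * ln t + (b - 1) * ln (1 - t)))"
  proof -
    have "complex_of_real ((a - 1) * ln t + (b - 1) * ln (1 - t)) =
      (of_real a - 1) * of_real (ln t) + (of_real b - 1) * of_real (ln (1 - t))" by simp
    then show ?thesis unfolding EB_def by (metis exp_of_real)
  qed
  also have "exp ((a - 1) * ln t + (b - 1) * ln (1 - t)) = t powr (a - 1) * (1 - t) powr (b - 1)"
    using assms by (simp add: powr_def exp_add mult.commute)
  finally show ?thesis .
qed

lemma EB_swap: "EB a b (1 - t) = EB b a t"
  unfolding EB_def by (simp add: add.commute)

lemma beta_real_int:
  fixes c d :: real
  assumes "0 < c" "0 < d"
  shows "((\<lambda>t. t powr (c - 1) * (1 - t) powr (d - 1)) has_integral Beta c d) {0<..<1}"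
  using has_integral_Beta_real[of c d] assms by (simp add: has_integral_Icc_iff_Ioo)

lemma EB_cont: "continuous_on {0<..<1} (EB a b)"
  unfolding EB_def by (intro continuous_intros) auto

lemma EB_cont2: "0 < e \<Longrightarrow> e \<le> 1/2 \<Longrightarrow> continuous_on {e..1-e} (EB a b)"
  unfolding EB_def by (intro continuous_intros) auto

lemma EB_absint:
  assumes "0 < Re a" "0 < Re b"
  shows "EB a b absolutely_integrable_on {0<..<1}"
proof (rule measurable_bounded_by_integrable_imp_absolutely_integrable)
  show "EB a b \<in> borel_measurable (lebesgue_on {0<..<1})"
    by (rule continuous_imp_measurable_on_sets_lebesgue[OF EB_cont]) auto
  show "(\<lambda>t. t powr (Re a - 1) * (1 - t) powr (Re b - 1)) integrable_on {0<..<1}"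
    using beta_real_int[OF assms] by blast
qed (auto simp: norm_EB)


lemma EB_swap_int:
  assumes "(EB a b has_integral I) {0<..<1}"
  shows "(EB b a has_integral I) {0<..<1}"
proof -
  have "(EB a b has_integral I) {0..1}" using assms by (simp add: has_integral_Icc_iff_Ioo)
  from has_integral_shift_real_ivl[OF this, of 1]
  have "((\<lambda>x. EB a b (x + 1)) has_integral I) {-1..0}" by simp
  then have "((\<lambda>x. EB a b (-x + 1)) has_integral I) {-0..-(-1)}"
    by (subst has_integral_reflect_real) simp
  then have "((\<lambda>x. EB a b (1 - x)) has_integral I) {0..1}" by simp
  then show ?thesis by (simp add: EB_swap has_integral_Icc_iff_Ioo)
qed

lemma F_hol:
  assumes "0 < e" "e \<le> 1/2"
  shows "(\<lambda>a. integral {e..1-e} (EB a b)) holomorphic_on {a. 0 < Re a}"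
proof -
  have "(\<lambda>a. integral (cbox e (1-e)) (EB a b)) holomorphic_on {a. 0 < Re a}"
  proof (rule leibniz_rule_holomorphic[where fx="\<lambda>a t. of_real (ln t) * EB a b t"])
    fix a t
    show "((\<lambda>a. EB a b t) has_field_derivative of_real (ln t) * EB a b t) (at a within {a. 0 < Re a})"
      unfolding EB_def by (auto intro!: derivative_eq_intros simp: mult_ac)
  next
    fix a
    show "EB a b integrable_on cbox e (1 - e)"
      using integrable_continuous_interval[OF EB_cont2[OF assms]] by simp
  next
    show "continuous_on ({a. 0 < Re a} \<times> cbox e (1 - e)) (\<lambda>(a, t). of_real (ln t) * EB a b t)"
      unfolding EB_def case_prod_unfold using assms
      by (intro continuous_intros) (auto simp: mem_Times_iff)
  qed (rule convex_halfspace_Re_gt)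
  then show ?thesis by simp
qed

lemma G_hol:
  assumes b: "0 < Re b"
  shows "(\<lambda>a. integral {0<..<1} (EB a b)) holomorphic_on {a. 0 < Re a}"
proof -
  define e where "e n = 1 / (real n + 3)" for n
  have e: "0 < e n" "e n \<le> 1/2" for n by (auto simp: e_def field_simps)
  define F where "F n a = integral {e n..1 - e n} (EB a b)" for n a
  show ?thesis
  proof (rule holomorphic_uniform_sequence[where f=F])
    show "open {a. 0 < Re a}" by (simp add: open_halfspace_Re_gt)
    show "F n holomorphic_on {a. 0 < Re a}" for n
      unfolding F_def using F_hol[OF e(1) e(2)] by blast
  next
    fix x assume x: "x \<in> {a. 0 < Re a}"
    define d where "d = Re x / 2"
    have d: "0 < d" using x by (simp add: d_def)
    have Re_ge: "d \<le> Re a" if "a \<in> cball x d" for a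
    proof -
      have "\<bar>Re x - Re a\<bar> \<le> norm (x - a)" using abs_Re_le_cmod[of "x - a"] by simp
      also have "\<dots> \<le> d" using that by (simp add: dist_norm)
      finally have "\<bar>Re x - Re a\<bar> \<le> d" .
      then show ?thesis using abs_ge_self[of "Re x - Re a"] unfolding d_def by linarith
    qed
    define H where "H t = t powr (d - 1) * (1 - t) powr (Re b - 1)" for t :: real
    have Hint: "H integrable_on {0<..<1}"
      using beta_real_int[OF d b] unfolding H_def by blast
    have Hnn: "0 \<le> H t" for t by (simp add: H_def)
    have bound: "norm (EB a b t) \<le> H t" if "a \<in> cball x d" "t \<in> {0<..<1}" for a t
    proof -
      have "t powr (Re a - 1) \<le> t powr (d - 1)"
        using that Re_ge[OF that(1)] by (intro powr_mono') auto
      then show ?thesis using that unfolding H_def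
        by (subst norm_EB) (auto intro!: mult_right_mono)
    qed
    define T where "T n = {e n..1 - e n}" for n
    have Tsub: "T n \<subseteq> {0<..<1}" for n using e[of n] by (auto simp: T_def)
    define K where "K n t = (if t \<in> T n then 0 else H t)" for n t
    have HTint: "(\<lambda>t. if t \<in> T n then H t else 0) integrable_on {0<..<1}" for n
    proof -
      have "H integrable_on T n"
        unfolding T_def by (rule integrable_on_subinterval[OF Hint]) (use Tsub[of n] in \<open>simp add: T_def\<close>)
      then show ?thesis using Tsub[of n] by (subst integrable_restrict_Int) (simp add: Int_absorb2)
    qed
    have Kint: "K n integrable_on {0<..<1}" for n
    proof -
      have "(\<lambda>t. H t - (if t \<in> T n then H t else 0)) integrable_on {0<..<1}"
        by (intro integrable_diff Hint HTint)
      moreover have "(\<lambda>t. H t - (if t \<in> T n then H t else 0)) = K n"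
        by (auto simp: K_def fun_eq_iff)
      ultimately show ?thesis by simp
    qed
    have Klim: "(\<lambda>n. integral {0<..<1} (K n)) \<longlonglongrightarrow> integral {0<..<1} (\<lambda>t::real. 0::real)"
    proof (rule Equivalence_Lebesgue_Henstock_Integration.dominated_convergence(2)[where f=K and h=H and g="\<lambda>t. 0"])
      show "K k integrable_on {0<..<1}" for k by (rule Kint)
      show "H integrable_on {0<..<1}" by (rule Hint)
      show "norm (K k t) \<le> H t" for k t using Hnn[of t] by (auto simp: K_def)
    next
      fix t :: real assume t: "t \<in> {0<..<1}"
      have "min t (1 - t) > 0" using t by auto
      then obtain N where N: "N > 0" "inverse (real N) < min t (1 - t)"
        using ex_inverse_of_nat_less by blast
      have "eventually (\<lambda>n. K n t = 0) sequentially"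
      proof (rule eventually_sequentiallyI[of N])
        fix n assume "N \<le> n"
        then have "e n \<le> inverse (real N)" using N(1) by (auto simp: e_def field_simps)
        then have "t \<in> T n" using N(2) by (auto simp: T_def)
        then show "K n t = 0" by (simp add: K_def)
      qed
      then show "(\<lambda>k. K k t) \<longlonglongrightarrow> 0" by (rule tendsto_eventually)
    qed
    then have Klim': "(\<lambda>n. integral {0<..<1} (K n)) \<longlonglongrightarrow> 0" by simp
    have key: "norm (integral {0<..<1} (EB a b) - F n a) \<le> integral {0<..<1} (K n)"
      if a: "a \<in> cball x d" for a n
    proof -
      have Ra: "0 < Re a" using Re_ge[OF a] d by simp
      have int1: "EB a b integrable_on {0<..<1}"
        using EB_absint[OF Ra b] set_lebesgue_integral_eq_integral(1) absolutely_integrable_on_def by blast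
      have int2: "EB a b integrable_on T n"
        unfolding T_def by (rule integrable_on_subinterval[OF int1]) (use Tsub[of n] in \<open>simp add: T_def\<close>)
      have int3: "(\<lambda>t. if t \<in> T n then EB a b t else 0) integrable_on {0<..<1}"
        using Tsub[of n] int2 by (subst integrable_restrict_Int) (simp add: Int_absorb2)
      have "F n a = integral {0<..<1} (\<lambda>t. if t \<in> T n then EB a b t else 0)"
      proof -
        have "integral {0<..<1} (\<lambda>t. if t \<in> T n then EB a b t else 0) = integral (T n \<inter> {0<..<1}) (EB a b)"
          by (rule integral_restrict_Int)
        also have "T n \<inter> {0<..<1} = T n" using Tsub[of n] by blast
        finally show ?thesis by (simp add: F_def T_def)
      qed
      then have "integral {0<..<1} (EB a b) - F n a =
          integral {0<..<1} (\<lambda>t. EB a b t - (if t \<in> T n then EB a b t else 0))"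
        using int1 int3 by (simp add: integral_diff)
      also have "norm \<dots> \<le> integral {0<..<1} (K n)"
      proof (rule integral_norm_bound_integral)
        show "(\<lambda>t. EB a b t - (if t \<in> T n then EB a b t else 0)) integrable_on {0<..<1}"
          by (intro integrable_diff int1 int3)
        show "K n integrable_on {0<..<1}" by (rule Kint)
        show "norm (EB a b t - (if t \<in> T n then EB a b t else 0)) \<le> K n t" if "t \<in> {0<..<1}" for t
          using bound[OF a that] by (auto simp: K_def)
      qed
      finally show ?thesis .
    qed
    have "uniform_limit (cball x d) F (\<lambda>a. integral {0<..<1} (EB a b)) sequentially"
    proof (rule uniform_limitI)
      fix \<epsilon> :: real assume "\<epsilon> > 0"
      with Klim' have "eventually (\<lambda>n. integral {0<..<1} (K n) < \<epsilon>) sequentially"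
        by (rule order_tendstoD(2))
      then show "\<forall>\<^sub>F n in sequentially. \<forall>a\<in>cball x d. dist (F n a) (integral {0<..<1} (EB a b)) < \<epsilon>"
      proof (rule eventually_mono)
        fix n assume n: "integral {0<..<1} (K n) < \<epsilon>"
        show "\<forall>a\<in>cball x d. dist (F n a) (integral {0<..<1} (EB a b)) < \<epsilon>"
        proof
          fix a assume "a \<in> cball x d"
          from key[OF this, of n] n show "dist (F n a) (integral {0<..<1} (EB a b)) < \<epsilon>"
            by (simp add: dist_norm norm_minus_commute)
        qed
      qed
    qed
    moreover have "cball x d \<subseteq> {a. 0 < Re a}" using Re_ge d by force
    ultimately show "\<exists>d>0. cball x d \<subseteq> {a. 0 < Re a} \<and> uniform_limit (cball x d) F (\<lambda>a. integral {0<..<1} (EB a b)) sequentially"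
      using d by blast
  qed
qed

lemma Re_pos_not_nonpos_Int: "z \<in> \<int>\<^sub>\<le>\<^sub>0 \<Longrightarrow> Re z \<le> 0"
  by (auto elim!: nonpos_Ints_cases)

lemma one_islimpt_pos_reals: "(1::complex) islimpt (complex_of_real ` {0<..})"
  unfolding islimpt_approachable
proof (intro allI impI)
  fix e :: real assume e: "0 < e"
  have A: "complex_of_real (1 + e/2) \<noteq> 1" using e by simp
  have "dist (complex_of_real (1 + e/2)) 1 = dist (1 + e/2) (1::real)"
    by (metis dist_of_real of_real_1)
  then have B: "dist (complex_of_real (1 + e/2)) 1 < e" using e by (simp add: dist_real_def)
  have C: "complex_of_real (1 + e/2) \<in> complex_of_real ` {0<..}" using e by (intro imageI) simp
  show "\<exists>x'\<in>complex_of_real ` {0<..}. x' \<noteq> 1 \<and> dist x' 1 < e"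
    using A B C by blast
qed

lemma EB_integrable:
  assumes "0 < Re a" "0 < Re b"
  shows "EB a b integrable_on {0<..<1}"
  using EB_absint[OF assms] set_lebesgue_integral_eq_integral(1) absolutely_integrable_on_def by blast

lemma G_swap:
  assumes "0 < Re a" "0 < Re b"
  shows "integral {0<..<1} (EB a b) = integral {0<..<1} (EB b a)"
  using EB_swap_int[OF integrable_integral[OF EB_integrable[OF assms]]]
  by (simp add: integral_unique)

lemma G_real:
  fixes r \<beta> :: real
  assumes "0 < r" "0 < \<beta>"
  shows "integral {0<..<1} (EB (of_real r) (of_real \<beta>)) = Beta (of_real r) (of_real \<beta>)"
proof -
  have "((\<lambda>t. complex_of_real (t powr (r-1) * (1-t) powr (\<beta>-1))) has_integral of_real (Beta r \<beta>)) {0<..<1}"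
    by (rule has_integral_of_real[OF beta_real_int[OF assms]])
  then have "(EB (of_real r) (of_real \<beta>) has_integral of_real (Beta r \<beta>)) {0<..<1}"
    by (subst has_integral_cong[where g="\<lambda>t. complex_of_real (t powr (r-1) * (1-t) powr (\<beta>-1))"])
       (auto simp: EB_real)
  then show ?thesis by (simp add: integral_unique Beta_complex_of_real)
qed

lemma G_step1:
  fixes \<beta> :: real
  assumes "0 < \<beta>" "0 < Re a"
  shows "integral {0<..<1} (EB a (of_real \<beta>)) = Beta a (of_real \<beta>)"
proof -
  have "(\<lambda>a. integral {0<..<1} (EB a (of_real \<beta>)) - Beta a (of_real \<beta>)) a = 0"
  proof (rule analytic_continuation[where S="{a. 0 < Re a}" and U="complex_of_real ` {0<..}" and \<xi>=1 and w=a and f="\<lambda>a. integral {0<..<1} (EB a (of_real \<beta>)) - Beta a (of_real \<beta>)"])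
    show "(\<lambda>a. integral {0<..<1} (EB a (of_real \<beta>)) - Beta a (of_real \<beta>)) holomorphic_on {a. 0 < Re a}"
      using assms by (intro holomorphic_on_diff G_hol holomorphic_Beta holomorphic_intros)
         (auto dest!: Re_pos_not_nonpos_Int)
    show "open {a. 0 < Re a}" by (simp add: open_halfspace_Re_gt)
    show "connected {a. 0 < Re a}" by (rule convex_connected[OF convex_halfspace_Re_gt])
    show "complex_of_real ` {0<..} \<subseteq> {a. 0 < Re a}" by auto
    show "(1::complex) \<in> {a. 0 < Re a}" by simp
    show "(1::complex) islimpt complex_of_real ` {0<..}" by (rule one_islimpt_pos_reals)
    show "a \<in> {a. 0 < Re a}" using assms by simp
    show "integral {0<..<1} (EB z (of_real \<beta>)) - Beta z (of_real \<beta>) = 0"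
      if "z \<in> complex_of_real ` {0<..}" for z
      using that G_real[OF _ assms(1)] by auto
  qed
  then show ?thesis by simp
qed

lemma G_eq_Beta:
  assumes "0 < Re a" "0 < Re b"
  shows "integral {0<..<1} (EB a b) = Beta a b"
proof -
  have "(\<lambda>b. integral {0<..<1} (EB a b) - Beta a b) b = 0"
  proof (rule analytic_continuation[where S="{a. 0 < Re a}" and U="complex_of_real ` {0<..}" and \<xi>=1 and w=b and f="\<lambda>b. integral {0<..<1} (EB a b) - Beta a b"])
    have "(\<lambda>b. integral {0<..<1} (EB b a)) holomorphic_on {a. 0 < Re a}"
      by (rule G_hol) (rule assms)
    then have "(\<lambda>b. integral {0<..<1} (EB a b)) holomorphic_on {a. 0 < Re a}"
      by (rule holomorphic_transform) (use G_swap assms(1) in auto)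
    then show "(\<lambda>b. integral {0<..<1} (EB a b) - Beta a b) holomorphic_on {a. 0 < Re a}"
      using assms by (intro holomorphic_on_diff holomorphic_Beta holomorphic_intros)
         (auto dest!: Re_pos_not_nonpos_Int)
    show "open {a. 0 < Re a}" by (simp add: open_halfspace_Re_gt)
    show "connected {a. 0 < Re a}" by (rule convex_connected[OF convex_halfspace_Re_gt])
    show "complex_of_real ` {0<..} \<subseteq> {a. 0 < Re a}" by auto
    show "(1::complex) \<in> {a. 0 < Re a}" by simp
    show "(1::complex) islimpt complex_of_real ` {0<..}" by (rule one_islimpt_pos_reals)
    show "b \<in> {a. 0 < Re a}" using assms by simp
    show "integral {0<..<1} (EB a z) - Beta a z = 0"
      if "z \<in> complex_of_real ` {0<..}" for z
      using that G_step1[OF _ assms(1)] by auto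
  qed
  then show ?thesis by simp
qed

lemma Beta_integral_complex':
  assumes "0 < Re a" "0 < Re b"
  shows "(EB a b has_integral Beta a b) {0<..<1}"
  using integrable_integral[OF EB_integrable[OF assms]] G_eq_Beta[OF assms] by simp


lemma schur_int:
  assumes psd: "psd_matrix n A"
    and int: "\<And>j k. j \<in> {1..n} \<Longrightarrow> k \<in> {1..n} \<Longrightarrow> ((\<lambda>t. g j t * cnj (g k t)) has_integral B j k) S"
  shows "psd_matrix n (\<lambda>j k. A j k * B j k)"
  unfolding psd_matrix_def
proof
  fix z :: "nat \<Rightarrow> complex"
  define Q where "Q t = (\<Sum>j=1..n. \<Sum>k=1..n. A j k * (z j * g j t) * cnj (z k * g k t))" for t
  define I where "I = (\<Sum>j=1..n. \<Sum>k=1..n. A j k * B j k * z j * cnj (z k))"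
  have "((\<lambda>t. \<Sum>j=1..n. \<Sum>k=1..n. (A j k * z j * cnj (z k)) * (g j t * cnj (g k t))) has_integral
        (\<Sum>j=1..n. \<Sum>k=1..n. (A j k * z j * cnj (z k)) * B j k)) S"
    by (intro has_integral_sum finite_atLeastAtMost has_integral_mult_right int) auto
  moreover have "(\<lambda>t. \<Sum>j=1..n. \<Sum>k=1..n. (A j k * z j * cnj (z k)) * (g j t * cnj (g k t))) = Q"
    unfolding Q_def by (intro ext sum.cong refl) (simp add: algebra_simps)
  moreover have "(\<Sum>j=1..n. \<Sum>k=1..n. (A j k * z j * cnj (z k)) * B j k) = I"
    unfolding I_def by (intro sum.cong refl) (simp add: algebra_simps)
  ultimately have QI: "(Q has_integral I) S" by simp
  have pt: "Im (Q t) = 0 \<and> 0 \<le> Re (Q t)" for t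
    using psd unfolding psd_matrix_def Q_def by (erule_tac x="\<lambda>j. z j * g j t" in allE) auto
  have "((\<lambda>t. Im (Q t)) has_integral Im I) S"
    using has_integral_linear[OF QI bounded_linear_Im] by (simp add: o_def)
  then have "((\<lambda>t. 0) has_integral Im I) S" using pt by simp
  then have "Im I = 0" using has_integral_0 has_integral_unique by blast
  moreover have "((\<lambda>t. Re (Q t)) has_integral Re I) S"
    using has_integral_linear[OF QI bounded_linear_Re] by (simp add: o_def)
  then have "0 \<le> Re I" by (rule has_integral_nonneg) (use pt in blast)
  ultimately show "Im (\<Sum>j=1..n. \<Sum>k=1..n. A j k * B j k * z j * cnj (z k)) = 0 \<and>
        0 \<le> Re (\<Sum>j=1..n. \<Sum>k=1..n. A j k * B j k * z j * cnj (z k))"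
    unfolding I_def by simp
qed

lemma ones_psd: "psd_matrix n (\<lambda>j k. 1)"
  unfolding psd_matrix_def
proof
  fix z :: "nat \<Rightarrow> complex"
  have "(\<Sum>j=1..n. \<Sum>k=1..n. 1 * z j * cnj (z k)) = (\<Sum>j=1..n. z j) * cnj (\<Sum>k=1..n. z k)"
    by (simp add: sum_distrib_left sum_distrib_right cnj_sum) (rule sum.swap)
  also have "\<dots> = of_real (norm (\<Sum>j=1..n. z j) ^ 2)"
    by (metis complex_norm_square of_real_power)
  finally show "Im (\<Sum>j=1..n. \<Sum>k=1..n. 1 * z j * cnj (z k)) = 0 \<and> 0 \<le> Re (\<Sum>j=1..n. \<Sum>k=1..n. 1 * z j * cnj (z k))"
    by simp
qed

theorem mainTheorem6:
  fixes m n :: nat and p q :: "nat \<Rightarrow> nat \<Rightarrow> complex"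
  assumes "\<And>j l. 1 \<le> j \<Longrightarrow> j \<le> n \<Longrightarrow> 1 \<le> l \<Longrightarrow> l \<le> m \<Longrightarrow> Re (p j l) > 0"
      and "\<And>j l. 1 \<le> j \<Longrightarrow> j \<le> n \<Longrightarrow> 1 \<le> l \<Longrightarrow> l \<le> m \<Longrightarrow> Re (q j l) > 0"
  shows "psd_matrix n (\<lambda>j k. \<Prod>l=1..m. Beta (p j l + cnj (p k l)) (q j l + cnj (q k l)))"
proof -
  have main: "\<forall>A. psd_matrix n A \<longrightarrow>
      psd_matrix n (\<lambda>j k. A j k * (\<Prod>l=1..r. Beta (p j l + cnj (p k l)) (q j l + cnj (q k l))))"
    if "r \<le> m" for r
    using that
  proof (induction r)
    case 0
    then show ?case by simp
  next
    case (Suc r)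
    show ?case
    proof (intro allI impI)
      fix A assume A: "psd_matrix n A"
      let ?B = "\<lambda>j k. Beta (p j (Suc r) + cnj (p k (Suc r))) (q j (Suc r) + cnj (q k (Suc r)))"
      have "psd_matrix n (\<lambda>j k. A j k * ?B j k)"
      proof (rule schur_int[OF A, where S="{0<..<1}" and g="\<lambda>j. EB (p j (Suc r) + 1/2) (q j (Suc r) + 1/2)"])
        fix j k assume jk: "j \<in> {1..n}" "k \<in> {1..n}"
        have "0 < Re (p j (Suc r) + cnj (p k (Suc r)))" "0 < Re (q j (Suc r) + cnj (q k (Suc r)))"
          using assms jk Suc.prems by (auto intro!: add_pos_pos)
        from Beta_integral_complex'[OF this]
        show "((\<lambda>t. EB (p j (Suc r) + 1/2) (q j (Suc r) + 1/2) t * cnj (EB (p k (Suc r) + 1/2) (q k (Suc r) + 1/2) t)) has_integral ?B j k) {0<..<1}"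
          by (simp only: EB_gram')
      qed
      with Suc.IH[rule_format, of "\<lambda>j k. A j k * ?B j k"] Suc.prems
      show "psd_matrix n (\<lambda>j k. A j k * (\<Prod>l=1..Suc r. Beta (p j l + cnj (p k l)) (q j l + cnj (q k l))))"
        by (simp add: prod.nat_ivl_Suc' mult_ac)
    qed
  qed
  have "psd_matrix n (\<lambda>j k. 1 * (\<Prod>l=1..m. Beta (p j l + cnj (p k l)) (q j l + cnj (q k l))))"
    using main[of m] ones_psd[of n] by blast
  then show ?thesis by simp
qed
end
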